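(* Let $I\subset\mathbb{Z}$ be an interval of integers (with $|I|$ its number of elements), and let $a,b,q\in\mathbb{Z}$, $q\ge 1$, satisfy $\gcd(a,q)=1$ and: $b\in\mathbb{Z}$ arbitrary when $q$ is odd; $b$ even when $q\equiv 0 \pmod 4$; $b$ odd when $q\equiv 2\pmod 4$. Let $f(r)=\frac{a}{q}r^2+\frac{b}{q}r$. Then $$\Big|\sum_{k\in I}e^{2\pi i f(k)}\Big| = C\frac{|I|}{\sqrt q}+\mathcal{O}\big(\sqrt{q\ln q}\big),$$ for some number $C$ with $\frac12\le C\le\sqrt2$, where the implied constant in $\mathcal{O}$ is absolute. *)

theory Defs
  imports "HOL-Analysis.Analysis"
begin

definition quad_phase :: "int \<Rightarrow> int \<Rightarrow> int \<Rightarrow> int \<Rightarrow> real" where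
  "quad_phase a b q r = (real_of_int a / real_of_int q) * (real_of_int r)^2
                       + (real_of_int b / real_of_int q) * real_of_int r"

definition quad_exp_sum :: "int \<Rightarrow> int \<Rightarrow> int \<Rightarrow> int set \<Rightarrow> complex" where
  "quad_exp_sum a b q I = (\<Sum>k\<in>I. exp (2 * of_real pi * \<i> * of_real (quad_phase a b q k)))"

end

theory Submission
  imports Defs
begin


definition ee :: "real \<Rightarrow> complex" where
  "ee x = exp (2 * of_real pi * \<i> * of_real x)"

lemma ee_add: "ee (x + y) = ee x * ee y"
  by (simp add: ee_def distrib_left exp_add)

lemma ee_int: "ee (of_int n) = 1"
proof -
  have "ee (of_int n) = exp (2 * of_real pi * \<i>) ^ nat \<bar>n\<bar> \<or> ee (of_int n) * exp (2 * of_real pi * \<i>) ^ nat \<bar>n\<bar> = 1"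
    unfolding ee_def
    by (cases "n \<ge> 0") (auto simp flip: exp_of_nat_mult exp_add simp: algebra_simps)
  then show ?thesis by simp
qed

lemma ee_add_int: "ee (x + of_int n) = ee x"
  by (simp add: ee_add ee_int)

lemma norm_ee [simp]: "cmod (ee x) = 1"
  unfolding ee_def by simp

lemma cnj_ee: "cnj (ee x) = ee (- x)"
  unfolding ee_def by (simp add: exp_cnj)

lemma ee_eq_1_iff: "ee x = 1 \<longleftrightarrow> x \<in> \<int>"
proof -
  have "ee x = 1 \<longleftrightarrow> (\<exists>n::int. 2 * pi * x = of_int (2 * n) * pi)"
    unfolding ee_def exp_eq_1 by simp
  also have "\<dots> \<longleftrightarrow> (\<exists>n::int. x = of_int n)"
    by (auto simp: field_simps)
  finally show ?thesis by (auto elim: Ints_cases)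
qed

lemma jordan:
  assumes "0 \<le> x" "x \<le> pi/2"
  shows "2 / pi * x \<le> sin x"
proof -
  have cv: "convex_on {0..pi} (\<lambda>x. - sin x)"
    by (rule convex_on_realI[where f' = "\<lambda>x. - cos x"])
       (auto intro!: derivative_eq_intros simp: cos_mono_le_eq)
  define t where "t = 2 / pi * x"
  have t: "0 \<le> t" "t \<le> 1" using assms pi_gt_zero by (auto simp: t_def field_simps)
  have "- sin ((1 - t) *\<^sub>R 0 + t *\<^sub>R (pi/2)) \<le> (1 - t) * (- sin 0) + t * (- sin (pi/2))"
    by (rule convex_onD[OF cv]) (use t pi_gt_zero in auto)
  moreover have "(1 - t) *\<^sub>R 0 + t *\<^sub>R (pi/2) = x" by (simp add: t_def)
  ultimately have "t \<le> sin x" by simp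
  then show ?thesis by (simp add: t_def)
qed

lemma norm_ee_minus_1: "cmod (ee t - 1) = 2 * \<bar>sin (pi * t)\<bar>"
proof -
  have e: "ee t = complex_of_real (cos (2*pi*t)) + \<i> * complex_of_real (sin (2*pi*t))"
    unfolding ee_def using cis_conv_exp[of "2*pi*t"]
    by (simp add: cis.ctr Complex_eq mult.commute mult.left_commute)
  have "(cmod (ee t - 1))^2 = (cos (2*pi*t) - 1)^2 + (sin (2*pi*t))^2"
    unfolding e cmod_power2 by simp
  also have "\<dots> = 2 - 2 * cos (2 * (pi*t))"
    by (simp add: power2_diff algebra_simps)
  also have "\<dots> = (2 * \<bar>sin (pi * t)\<bar>)^2"
    by (simp add: cos_double_sin power_mult_distrib)
  finally show ?thesis
    by (metis abs_of_nonneg norm_ge_zero power2_eq_iff_nonneg abs_ge_zero mult_nonneg_nonneg zero_le_numeral)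
qed



lemma periodic_mult:
  fixes F :: "int \<Rightarrow> 'a"
  assumes per: "\<And>x. F (x + q) = F x"
  shows "F (x + t * q) = F x"
proof -
  have nat: "F (y + int n * q) = F y" for y n
  proof (induction n)
    case 0 then show ?case by simp
  next
    case (Suc n)
    have "F (y + int (Suc n) * q) = F ((y + int n * q) + q)" by (simp add: algebra_simps)
    also have "\<dots> = F y" using per Suc by simp
    finally show ?case .
  qed
  show ?thesis
  proof (cases "t \<ge> 0")
    case True
    then show ?thesis using nat[of x "nat t"] by simp
  next
    case False
    have "F ((x + t * q) + int (nat (-t)) * q) = F (x + t * q)" using nat by blast
    moreover have "(x + t * q) + int (nat (-t)) * q = x" using False by (simp add: algebra_simps)
    ultimately show ?thesis by metis
  qed
qed

lemma periodic_mod: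
  fixes F :: "int \<Rightarrow> 'a"
  assumes per: "\<And>x. F (x + q) = F x"
  shows "F x = F (x mod q)"
  using periodic_mult[of F q "x mod q" "x div q", OF per] by simp

lemma sum_periodic_affine:
  fixes F :: "int \<Rightarrow> 'a::comm_monoid_add"
  assumes q: "q \<ge> 1" and per: "\<And>x. F (x + q) = F x" and cop: "coprime c q"
  shows "(\<Sum>i\<in>{0..q-1}. F (c * i + m)) = (\<Sum>i\<in>{0..q-1}. F i)"
proof -
  define g where "g i = (c * i + m) mod q" for i
  have inj: "inj_on g {0..q-1}"
  proof
    fix i j assume ij: "i \<in> {0..q-1}" "j \<in> {0..q-1}" "g i = g j"
    then have "q dvd (c * i + m) - (c * j + m)" unfolding g_def using mod_eq_dvd_iff by blast
    then have "q dvd c * (i - j)" by (simp add: algebra_simps)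
    then have "q dvd (i - j)" using cop
      by (metis coprime_commute coprime_dvd_mult_right_iff)
    moreover have "\<bar>i - j\<bar> < q" using ij by auto
    ultimately show "i = j" using dvd_imp_le_int[of "i - j" q] q by fastforce
  qed
  have sub: "g ` {0..q-1} \<subseteq> {0..q-1}" using q by (auto simp: g_def)
  have eq: "g ` {0..q-1} = {0..q-1}"
    by (rule card_subset_eq) (use sub card_image[OF inj] in auto)
  have "(\<Sum>i\<in>{0..q-1}. F (c * i + m)) = (\<Sum>i\<in>{0..q-1}. F (g i))"
    using periodic_mod[of F q, OF per] by (simp add: g_def)
  also have "\<dots> = (\<Sum>i\<in>g ` {0..q-1}. F i)" using sum.reindex[OF inj, of F] by simp
  finally show ?thesis using eq by simp
qed

lemma sum_periodic_shift:
  fixes F :: "int \<Rightarrow> 'a::comm_monoid_add"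
  assumes q: "q \<ge> 1" and per: "\<And>x. F (x + q) = F x"
  shows "(\<Sum>k\<in>{m..m+q-1}. F k) = (\<Sum>i\<in>{0..q-1}. F i)"
proof -
  have "(\<Sum>k\<in>{m..m+q-1}. F k) = (\<Sum>k\<in>(plus m) ` {0..q-1}. F k)"
    by (simp add: add.commute add_diff_eq)
  also have "\<dots> = (\<Sum>i\<in>{0..q-1}. F (m + i))" by (subst sum.reindex) auto
  also have "\<dots> = (\<Sum>i\<in>{0..q-1}. F (1 * i + m))" by (simp add: add.commute)
  also have "\<dots> = (\<Sum>i\<in>{0..q-1}. F i)" by (rule sum_periodic_affine[where F=F and q=q, OF q per]) simp
  finally show ?thesis .
qed

lemma ee_geom_tele:
  assumes "A - 1 \<le> B"
  shows "(ee t - 1) * (\<Sum>k\<in>{A..B}. ee (t * of_int k)) = ee (t * of_int (B + 1)) - ee (t * of_int A)"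
  using assms
proof (induction B rule: int_ge_induct)
  case base
  then show ?case by simp
next
  case (step i)
  have "{A..i+1} = insert (i+1) {A..i}" using step by auto
  then have "(\<Sum>k\<in>{A..i+1}. ee (t * of_int k)) = ee (t * of_int (i+1)) + (\<Sum>k\<in>{A..i}. ee (t * of_int k))"
    by simp
  then have "(ee t - 1) * (\<Sum>k\<in>{A..i+1}. ee (t * of_int k)) =
     (ee t - 1) * ee (t * of_int (i+1)) + (ee (t * of_int (i + 1)) - ee (t * of_int A))"
    using step by (simp add: distrib_left)
  also have "\<dots> = ee (t * of_int (i + 1 + 1)) - ee (t * of_int A)"
    by (simp add: algebra_simps flip: ee_add)
  finally show ?case .
qed

lemma ee_geom_bound:
  assumes "ee t \<noteq> 1"
  shows "cmod (\<Sum>k\<in>{A..B}. ee (t * of_int k)) \<le> 2 / cmod (ee t - 1)"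
proof (cases "A - 1 \<le> B")
  case True
  have pos: "cmod (ee t - 1) > 0" using assms by simp
  have "cmod (ee t - 1) * cmod (\<Sum>k\<in>{A..B}. ee (t * of_int k)) = cmod (ee (t * of_int (B + 1)) - ee (t * of_int A))"
    using ee_geom_tele[OF True, of t] by (metis norm_mult)
  also have "\<dots> \<le> 2" using norm_triangle_ineq4[of "ee (t * of_int (B + 1))" "ee (t * of_int A)"] by simp
  finally show ?thesis using pos by (simp add: field_simps)
next
  case False
  then show ?thesis by simp
qed

lemma double_sum_diff:
  fixes J D :: "int set" and F :: "int \<Rightarrow> int \<Rightarrow> 'a::comm_monoid_add"
  assumes fin: "finite J" "finite D" and diff: "\<And>j k. j \<in> J \<Longrightarrow> k \<in> J \<Longrightarrow> j - k \<in> D"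
  shows "(\<Sum>j\<in>J. \<Sum>k\<in>J. F j k) = (\<Sum>h\<in>D. \<Sum>k\<in>{k\<in>J. k + h \<in> J}. F (k + h) k)"
proof -
  have "(\<Sum>h\<in>D. \<Sum>k\<in>{k\<in>J. k + h \<in> J}. F (k + h) k) = (\<Sum>h\<in>D. \<Sum>k\<in>J. if k + h \<in> J then F (k + h) k else 0)"
    using fin by (simp add: sum.inter_filter)
  also have "\<dots> = (\<Sum>k\<in>J. \<Sum>h\<in>D. if k + h \<in> J then F (k + h) k else 0)"
    by (rule sum.swap)
  also have "\<dots> = (\<Sum>k\<in>J. \<Sum>h\<in>{h\<in>D. k + h \<in> J}. F (k + h) k)"
    using fin by (simp add: sum.inter_filter)
  also have "\<dots> = (\<Sum>k\<in>J. \<Sum>j\<in>J. F j k)"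
  proof (rule sum.cong[OF refl])
    fix k assume k: "k \<in> J"
    have img: "{h\<in>D. k + h \<in> J} = (\<lambda>j. j - k) ` J"
      using diff[OF _ k] by force
    have "(\<Sum>h\<in>{h\<in>D. k + h \<in> J}. F (k + h) k) = (\<Sum>h\<in>(\<lambda>j. j - k) ` J. F (k + h) k)"
      using img by simp
    also have "\<dots> = (\<Sum>j\<in>J. F j k)" by (subst sum.reindex) (auto simp: inj_on_def)
    finally show "(\<Sum>h\<in>{h\<in>D. k + h \<in> J}. F (k + h) k) = (\<Sum>j\<in>J. F j k)" .
  qed
  also have "\<dots> = (\<Sum>j\<in>J. \<Sum>k\<in>J. F j k)" by (rule sum.swap)
  finally show ?thesis by simp
qed



definition phi :: "int \<Rightarrow> int \<Rightarrow> real" where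
  "phi q u = (if u mod q = 0 then real_of_int q else 1 / sin (pi * real_of_int (u mod q) / real_of_int q))"

lemma phi_per: "phi q (u + t * q) = phi q u"
  unfolding phi_def by simp

lemma phi_nonneg: assumes "q \<ge> 1" shows "phi q u \<ge> 0"
proof -
  have "0 \<le> u mod q" "u mod q < q" using assms by auto
  have "sin (pi * real_of_int (u mod q) / real_of_int q) > 0" if "u mod q \<noteq> 0"
  proof (rule sin_gt_zero)
    have "0 < u mod q" using that \<open>0 \<le> u mod q\<close> by linarith
    then show "0 < pi * real_of_int (u mod q) / real_of_int q" using assms by simp
    show "pi * real_of_int (u mod q) / real_of_int q < pi" using \<open>u mod q < q\<close> assms
      by (simp add: field_simps)
  qed
  then show ?thesis using assms unfolding phi_def by auto
qed

lemma inv_le_inv: "0 < (y::real) \<Longrightarrow> y \<le> x \<Longrightarrow> 1 / x \<le> 1 / y"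
  using le_imp_inverse_le[of y x] by (simp add: divide_inverse)

lemma inv_sin_bound:
  assumes q: "q \<ge> 1" and u: "1 \<le> u" "u \<le> q - 1"
  shows "1 / sin (pi * real_of_int u / real_of_int q) \<le> real_of_int q / (2 * real_of_int u) + real_of_int q / (2 * (real_of_int q - real_of_int u))"
proof -
  have qp: "real_of_int q > 0" using q by simp
  have t1: "real_of_int q / (2 * real_of_int u) \<ge> 0" "real_of_int q / (2 * (real_of_int q - real_of_int u)) \<ge> 0" using q u by auto
  show ?thesis
  proof (cases "2 * u \<le> q")
    case True
    have "2 / pi * (pi * u / q) \<le> sin (pi * u / q)"
      by (rule jordan) (use True qp u in \<open>auto simp: field_simps\<close>)
    then have s: "2 * u / q \<le> sin (pi * u / q)" by simp
    have "2 * u / q > 0" using u qp by simp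
    then have "1 / sin (pi * u / q) \<le> 1 / (2 * u / q)" using s by (intro inv_le_inv) auto
    also have "\<dots> = real_of_int q / (2 * real_of_int u)" by simp
    finally show ?thesis using t1 by linarith
  next
    case False
    have "2 / pi * (pi * (q - u) / q) \<le> sin (pi * (q - u) / q)"
      by (rule jordan) (use False qp u in \<open>auto simp: field_simps\<close>)
    moreover have "sin (pi * (q - u) / q) = sin (pi * u / q)"
    proof -
      have "pi * (q - u) / q = pi - pi * u / q" using qp by (simp add: field_simps)
      then show ?thesis by simp
    qed
    ultimately have s: "2 * (q - u) / q \<le> sin (pi * u / q)" by simp
    have "2 * (q - u) / q > 0" using u qp by simp
    then have "1 / sin (pi * u / q) \<le> 1 / (2 * (q - u) / q)" using s by (intro inv_le_inv) auto
    also have "\<dots> = real_of_int q / (2 * (real_of_int q - real_of_int u))" by simp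
    finally show ?thesis using t1 by linarith
  qed
qed

lemma harm_int:
  assumes "q \<ge> 1"
  shows "(\<Sum>u\<in>{1..q-1}. 1 / real_of_int u) = harm (nat (q - 1))"
proof -
  have "{1..q-1} = int ` {1..nat (q-1)}" using assms by (simp add: image_int_atLeastAtMost)
  then have "(\<Sum>u\<in>{1..q-1}. 1 / real_of_int u) = (\<Sum>k\<in>{1..nat (q-1)}. 1 / real k)"
    by (simp add: sum.reindex)
  then show ?thesis by (simp add: harm_def divide_inverse)
qed

lemma harm_le_ln: "n \<ge> 1 \<Longrightarrow> harm n \<le> ln (real n) + (1::real)"
  using euler_mascheroni_sequence_decreasing[of 1 n] by (simp add: harm_def)

lemma phi_sum_bound:
  assumes q: "q \<ge> 1"
  shows "(\<Sum>u\<in>{0..q-1}. phi q u) \<le> q * (2 + ln q)"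
proof -
  define H where "H = (\<Sum>u\<in>{1..q-1}. 1 / real_of_int u)"
  have split: "{0..q-1} = insert 0 {1..q-1}" using q by auto
  have e1: "(\<Sum>u\<in>{0..q-1}. phi q u) = q + (\<Sum>u\<in>{1..q-1}. phi q u)"
    unfolding split by (simp add: phi_def)
  have e2: "(\<Sum>u\<in>{1..q-1}. phi q u) \<le> (\<Sum>u\<in>{1..q-1}. real_of_int q / (2 * real_of_int u) + real_of_int q / (2 * (real_of_int q - real_of_int u)))"
  proof (rule sum_mono)
    fix u assume u: "u \<in> {1..q-1}"
    then have "u mod q = u" by auto
    then have "phi q u = 1 / sin (pi * real_of_int u / real_of_int q)" using u by (simp add: phi_def)
    then show "phi q u \<le> real_of_int q / (2 * real_of_int u) + real_of_int q / (2 * (real_of_int q - real_of_int u))" using inv_sin_bound[OF q] u by auto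
  qed
  have e3: "(\<Sum>u\<in>{1..q-1}. real_of_int q / (2 * real_of_int u) + real_of_int q / (2 * (real_of_int q - real_of_int u))) =
      q / 2 * H + q / 2 * (\<Sum>u\<in>{1..q-1}. 1 / real_of_int (q - u))"
    unfolding H_def by (simp add: sum.distrib sum_distrib_left)
  have e4: "(\<Sum>u\<in>{1..q-1}. 1 / real_of_int (q - u)) = H"
  proof -
    have img: "(\<lambda>u. q - u) ` {1..q-1} = {1..q-1}"
    proof
      show "{1..q-1} \<subseteq> (\<lambda>u. q - u) ` {1..q-1}"
      proof
        fix x assume "x \<in> {1..q-1}"
        then show "x \<in> (\<lambda>u. q - u) ` {1..q-1}" by (intro image_eqI[of _ _ "q - x"]) auto
      qed
    qed auto
    have "H = (\<Sum>u\<in>(\<lambda>u. q - u) ` {1..q-1}. 1 / real_of_int u)"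
      unfolding H_def using img by simp
    also have "\<dots> = (\<Sum>u\<in>{1..q-1}. 1 / real_of_int (q - u))"
      by (subst sum.reindex) (auto simp: inj_on_def)
    finally show ?thesis by simp
  qed
  have e5: "H = harm (nat (q - 1))" unfolding H_def by (rule harm_int[OF q])
  have e6: "harm (nat (q - 1)) \<le> 1 + ln q"
  proof (cases "q = 1")
    case True then show ?thesis by (simp add: harm_def)
  next
    case False
    then have "harm (nat (q - 1)) \<le> ln (real (nat (q - 1))) + 1" using q by (intro harm_le_ln) auto
    also have "ln (real (nat (q - 1))) \<le> ln q" using q False by auto
    finally show ?thesis by simp
  qed
  have "q * H \<le> q * (1 + ln q)" using q e5 e6 by (intro mult_left_mono) auto
  moreover have "q / 2 * H + q / 2 * H = q * H" by (simp add: field_simps)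
  ultimately show ?thesis using e1 e2 e3 e4 by (simp add: algebra_simps)
qed



definition zz :: "int \<Rightarrow> int \<Rightarrow> int \<Rightarrow> int \<Rightarrow> complex" where
  "zz a b q k = ee (quad_phase a b q k)"

lemma quad_exp_sum_zz: "quad_exp_sum a b q I = (\<Sum>k\<in>I. zz a b q k)"
  unfolding quad_exp_sum_def zz_def ee_def by simp

lemma zz_per: assumes "q \<ge> 1" shows "zz a b q (k + q) = zz a b q k"
proof -
  have "quad_phase a b q (k + q) = quad_phase a b q k + of_int (2 * a * k + a * q + b)"
    using assms unfolding quad_phase_def by (simp add: field_simps power2_eq_square)
  then show ?thesis unfolding zz_def by (simp only: ee_add_int)
qed

lemma zz_diff: assumes "q \<ge> 1"
  shows "zz a b q (k + h) * cnj (zz a b q k) =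
    ee ((a * h^2 + b * h) / q) * ee ((2 * a * h / q) * of_int k)"
proof -
  have "quad_phase a b q (k + h) + - quad_phase a b q k = (a * h^2 + b * h) / q + (2 * a * h / q) * of_int k"
    using assms unfolding quad_phase_def by (simp add: field_simps power2_eq_square)
  then show ?thesis unfolding zz_def by (simp add: cnj_ee flip: ee_add)
qed

lemma inner_bound:
  assumes q: "q \<ge> 1" and N: "0 \<le> N" "N \<le> q"
  shows "cmod (\<Sum>k\<in>{k\<in>{M..M+N-1}. k + h \<in> {M..M+N-1}}. ee ((2 * a * h / q) * of_int k)) \<le> phi q (2 * a * h)"
proof -
  define A where "A = max M (M - h)"
  define B where "B = min (M+N-1) (M+N-1-h)"
  have Jh: "{k\<in>{M..M+N-1}. k + h \<in> {M..M+N-1}} = {A..B}" unfolding A_def B_def by auto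
  define v where "v = (2 * a * h) mod q"
  show ?thesis
  proof (cases "v = 0")
    case True
    have "cmod (\<Sum>k\<in>{A..B}. ee ((2 * a * h / q) * of_int k)) \<le> (\<Sum>k\<in>{A..B}. 1)"
      by (rule order_trans[OF norm_sum]) simp
    also have "\<dots> = real (card {A..B})" by simp
    also have "card {A..B} \<le> card {M..M+N-1}" by (rule card_mono) (auto simp: A_def B_def)
    then have "real (card {A..B}) \<le> real (nat N)" by simp
    finally show ?thesis using True N unfolding Jh phi_def v_def by simp
  next
    case False
    have v0: "0 \<le> v" using q unfolding v_def by simp
    have v1: "0 < v" using False v0 by linarith
    have v2: "v < q" unfolding v_def using q by simp
    note v = v1 v2
    have qp: "real_of_int q > 0" using q by simp
    define d where "d = (2 * a * h) div q"
    have "2 * a * h = v + q * d" unfolding v_def d_def by simp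
    then have "real_of_int (2 * a * h) = real_of_int (v + q * d)" by (rule arg_cong)
    then have e: "real_of_int (2 * a * h) = real_of_int v + real_of_int q * real_of_int d" by simp
    have th: "real_of_int (2 * a * h) / real_of_int q = real_of_int v / real_of_int q + real_of_int d"
      unfolding e using qp by (simp add: add_divide_distrib)
    have eqv: "ee (2 * a * h / q) = ee (v / q)" unfolding th by (rule ee_add_int)
    have sinpos: "sin (pi * (v / q)) > 0" using v qp by (intro sin_gt_zero) (auto simp: field_simps)
    have nrm: "cmod (ee (v / q) - 1) = 2 * sin (pi * (v / q))"
      using norm_ee_minus_1[of "v / q"] sinpos by simp
    have ne: "ee (2 * a * h / q) \<noteq> 1" using eqv nrm sinpos by auto
    have "cmod (\<Sum>k\<in>{A..B}. ee ((2 * a * h / q) * of_int k)) \<le> 2 / cmod (ee (2 * a * h / q) - 1)"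
      by (rule ee_geom_bound[OF ne])
    also have "\<dots> = 1 / sin (pi * v / q)" unfolding eqv nrm by simp
    finally show ?thesis unfolding Jh phi_def using False by (simp add: v_def)
  qed
qed



lemma phi_sum_D:
  assumes q: "q \<ge> 1" and cop: "coprime a q"
  shows "(\<Sum>h\<in>{-q..q-1}. phi q (2 * a * h)) \<le> 4 * (q * (2 + ln q))"
proof -
  define F where "F h = phi q (2 * a * h)" for h
  have perF: "F (x + q) = F x" for x
    unfolding F_def using phi_per[of q "2 * a * x" "2 * a"] by (simp add: algebra_simps)
  define P where "P = (\<lambda>u. phi q (2 * u))"
  have perP: "P (x + q) = P x" for x
    unfolding P_def using phi_per[of q "2 * x" 2] by (simp add: algebra_simps)
  have per1: "phi q (x + q) = phi q x" for x using phi_per[of q x 1] by simp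
  have nn: "\<And>u. phi q u \<ge> 0" using phi_nonneg[OF q] by blast
  have s1: "{-q..q-1} = {-q..-q+q-1} \<union> {0..q-1}" using q by auto
  have "(\<Sum>h\<in>{-q..q-1}. F h) = (\<Sum>h\<in>{-q..-q+q-1}. F h) + (\<Sum>h\<in>{0..q-1}. F h)"
    unfolding s1 by (rule sum.union_disjoint) auto
  also have "(\<Sum>h\<in>{-q..-q+q-1}. F h) = (\<Sum>h\<in>{0..q-1}. F h)"
    by (rule sum_periodic_shift[where F=F and q=q, OF q perF])
  finally have a1: "(\<Sum>h\<in>{-q..q-1}. F h) = 2 * (\<Sum>h\<in>{0..q-1}. F h)" by simp
  have "(\<Sum>h\<in>{0..q-1}. P (a * h + 0)) = (\<Sum>h\<in>{0..q-1}. P h)"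
    by (rule sum_periodic_affine[where F = P, OF q perP cop])
  then have a2: "(\<Sum>h\<in>{0..q-1}. F h) = (\<Sum>h\<in>{0..q-1}. P h)"
    unfolding F_def P_def by (simp add: mult.assoc)
  have "(\<Sum>h\<in>{0..q-1}. P h) = (\<Sum>u\<in>(\<lambda>h. 2 * h) ` {0..q-1}. phi q u)"
    unfolding P_def by (subst sum.reindex) (auto simp: inj_on_def)
  also have "\<dots> \<le> (\<Sum>u\<in>{0..q+q-1}. phi q u)"
    by (rule sum_mono2) (auto simp: nn)
  also have "{0..q+q-1} = {0..q-1} \<union> {q..q+q-1}" using q by auto
  then have "(\<Sum>u\<in>{0..q+q-1}. phi q u) = (\<Sum>u\<in>{0..q-1}. phi q u) + (\<Sum>u\<in>{q..q+q-1}. phi q u)"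
    by (simp add: sum.union_disjoint)
  also have "(\<Sum>u\<in>{q..q+q-1}. phi q u) = (\<Sum>u\<in>{0..q-1}. phi q u)"
    by (rule sum_periodic_shift[where F="phi q" and q=q, OF q per1])
  finally have a3: "(\<Sum>h\<in>{0..q-1}. P h) \<le> 2 * (\<Sum>u\<in>{0..q-1}. phi q u)" by simp
  show ?thesis using a1 a2 a3 phi_sum_bound[OF q] unfolding F_def by linarith
qed

lemma weyl_bound:
  assumes q: "q \<ge> 1" and cop: "coprime a q" and N: "0 \<le> N" "N \<le> q"
  shows "(cmod (\<Sum>k\<in>{M..M+N-1}. zz a b q k))^2 \<le> 4 * (q * (2 + ln q))"
proof -
  define J where "J = {M..M+N-1}"
  define S where "S = (\<Sum>k\<in>J. zz a b q k)"
  have "complex_of_real ((cmod S)^2) = S * cnj S" by (rule complex_norm_square)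
  also have "\<dots> = (\<Sum>j\<in>J. \<Sum>k\<in>J. zz a b q j * cnj (zz a b q k))"
    unfolding S_def by (simp add: sum_product cnj_sum)
  also have "\<dots> = (\<Sum>h\<in>{-q..q-1}. \<Sum>k\<in>{k\<in>J. k + h \<in> J}. zz a b q (k + h) * cnj (zz a b q k))"
    by (rule double_sum_diff) (use N in \<open>auto simp: J_def\<close>)
  finally have eq: "complex_of_real ((cmod S)^2) = \<dots>" .
  have "(cmod S)^2 = cmod (complex_of_real ((cmod S)^2))" by (metis abs_power2 norm_of_real)
  also have "\<dots> \<le> (\<Sum>h\<in>{-q..q-1}. cmod (\<Sum>k\<in>{k\<in>J. k + h \<in> J}. zz a b q (k + h) * cnj (zz a b q k)))"
    unfolding eq by (rule norm_sum)
  also have "\<dots> \<le> (\<Sum>h\<in>{-q..q-1}. phi q (2 * a * h))"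
  proof (rule sum_mono)
    fix h
    have "cmod (\<Sum>k\<in>{k\<in>J. k + h \<in> J}. zz a b q (k + h) * cnj (zz a b q k))
        = cmod (ee ((a * h^2 + b * h) / q) * (\<Sum>k\<in>{k\<in>J. k + h \<in> J}. ee ((2 * a * h / q) * of_int k)))"
      by (simp add: zz_diff[OF q] sum_distrib_left)
    also have "\<dots> = cmod (\<Sum>k\<in>{k\<in>J. k + h \<in> J}. ee ((2 * a * h / q) * of_int k))"
      by (simp add: norm_mult)
    also have "\<dots> \<le> phi q (2 * a * h)" using inner_bound[OF q N, where M=M and a=a and h=h] unfolding J_def by simp
    finally show "cmod (\<Sum>k\<in>{k\<in>J. k + h \<in> J}. zz a b q (k + h) * cnj (zz a b q k)) \<le> phi q (2 * a * h)" .
  qed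
  also have "\<dots> \<le> 4 * (q * (2 + ln q))" by (rule phi_sum_D[OF q cop])
  finally show ?thesis unfolding S_def J_def .
qed



lemma ee_0 [simp]: "ee 0 = 1" by (simp add: ee_def)

lemma geom_full:
  fixes a h q :: int
  assumes q: "q \<ge> 1"
  shows "(\<Sum>k\<in>{0..q-1}. ee ((2 * a * h / q) * of_int k)) = (if q dvd 2 * a * h then of_int q else 0)"
proof (cases "q dvd 2 * a * h")
  case True
  then obtain c where c: "2 * a * h = q * c" by blast
  have qp: "real_of_int q > 0" using q by simp
  have "real_of_int (2 * a * h) = real_of_int (q * c)" using c by (rule arg_cong)
  then have th: "real_of_int (2 * a * h) / real_of_int q = real_of_int c" using qp by (simp add: field_simps)
  have "(\<Sum>k\<in>{0..q-1}. ee ((2 * a * h / q) * of_int k)) = (\<Sum>k\<in>{0..q-1}. 1)"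
  proof (rule sum.cong[OF refl])
    fix k
    have "ee ((real_of_int (2 * a * h) / real_of_int q) * of_int k) = ee (of_int (c * k))" unfolding th by simp
    also have "\<dots> = 1" by (rule ee_int)
    finally show "ee ((2 * a * h / q) * of_int k) = 1" .
  qed
  also have "\<dots> = of_int q" using q by simp
  finally show ?thesis using True by simp
next
  case False
  have qp: "real_of_int q > 0" using q by simp
  have ne: "ee (2 * a * h / q) \<noteq> 1"
  proof
    assume "ee (2 * a * h / q) = 1"
    then obtain n where n: "real_of_int (2 * a * h) / real_of_int q = of_int n"
      unfolding ee_eq_1_iff by (auto elim: Ints_cases)
    then have "real_of_int (2 * a * h) = real_of_int (q * n)" using qp by (simp add: field_simps)
    then have "2 * a * h = q * n" by (simp only: of_int_eq_iff)
    then show False using False by simp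
  qed
  have "(ee (2 * a * h / q) - 1) * (\<Sum>k\<in>{0..q-1}. ee ((2 * a * h / q) * of_int k))
      = ee ((2 * a * h / q) * of_int (q - 1 + 1)) - ee ((2 * a * h / q) * of_int 0)"
    by (rule ee_geom_tele) (use q in simp)
  also have "(real_of_int (2 * a * h) / real_of_int q) * of_int (q - 1 + 1) = of_int (2 * a * h)"
    using qp by simp
  finally have "(ee (2 * a * h / q) - 1) * (\<Sum>k\<in>{0..q-1}. ee ((2 * a * h / q) * of_int k)) = 0"
    by (simp add: ee_int del: of_int_mult)
  then show ?thesis using ne False by simp
qed

lemma dvd_set:
  assumes q: "q \<ge> (1::int)"
  shows "{h\<in>{0..q-1}. q dvd 2 * h} = insert 0 (if even q then {q div 2} else {})"
proof (intro equalityI subsetI)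
  fix h assume "h \<in> {h\<in>{0..q-1}. q dvd 2 * h}"
  then have h: "0 \<le> h" "h \<le> q - 1" "q dvd 2 * h" by auto
  then obtain c where c: "2 * h = q * c" by blast
  have "0 \<le> q * c" using c h by linarith
  then have c0: "0 \<le> c" using q by (simp add: zero_le_mult_iff)
  have "q * c < q * 2" using c h by linarith
  then have c2: "c < 2" using q by simp
  show "h \<in> insert 0 (if even q then {q div 2} else {})"
  proof (cases "c = 0")
    case True then have "h = 0" using c by simp
    then show ?thesis by simp
  next
    case False
    then have "c = 1" using c0 c2 by linarith
    then have hq: "2 * h = q" using c by simp
    then have "even q" by (metis dvd_triv_left)
    moreover have "h = q div 2" using hq by simp
    ultimately show ?thesis by simp
  qed
next
  fix h assume hh: "h \<in> insert 0 (if even q then {q div 2} else {})"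
  show "h \<in> {h\<in>{0..q-1}. q dvd 2 * h}"
  proof (cases "h = 0")
    case True then show ?thesis using q by simp
  next
    case False
    then have ev: "even q" and h: "h = q div 2" using hh by (auto split: if_splits)
    have "2 * h = q" using ev h by simp
    then show ?thesis using q by auto
  qed
qed



lemma gauss_full:
  fixes a b q :: int
  assumes q: "q \<ge> 1" and cop: "coprime a q"
    and b0: "q mod 4 = 0 \<longrightarrow> even b" and b2: "q mod 4 = 2 \<longrightarrow> odd b"
  shows "(cmod (\<Sum>k\<in>{0..q-1}. zz a b q k))^2 = (if even q then 2 * q else q)"
proof -
  define P where "P = {0..q-1}"
  define G where "G = (\<Sum>k\<in>P. zz a b q k)"
  define al where "al h = ee ((a * h^2 + b * h) / q)" for h
  have per: "zz a b q (x + q) = zz a b q x" for x by (rule zz_per[OF q])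
  have "complex_of_real ((cmod G)^2) = G * cnj G" by (rule complex_norm_square)
  also have "\<dots> = (\<Sum>j\<in>P. \<Sum>k\<in>P. zz a b q j * cnj (zz a b q k))"
    unfolding G_def by (simp add: sum_product cnj_sum)
  also have "\<dots> = (\<Sum>k\<in>P. \<Sum>j\<in>P. zz a b q j * cnj (zz a b q k))" by (rule sum.swap)
  also have "\<dots> = (\<Sum>k\<in>P. \<Sum>h\<in>P. zz a b q (k + h) * cnj (zz a b q k))"
  proof (rule sum.cong[OF refl])
    fix k
    define F where "F j = zz a b q j * cnj (zz a b q k)" for j
    have perF: "F (x + q) = F x" for x unfolding F_def using per by simp
    have "(\<Sum>h\<in>P. F (1 * h + k)) = (\<Sum>j\<in>P. F j)"
      unfolding P_def by (rule sum_periodic_affine[where F = F, OF q perF]) simp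
    then show "(\<Sum>j\<in>P. zz a b q j * cnj (zz a b q k)) = (\<Sum>h\<in>P. zz a b q (k + h) * cnj (zz a b q k))"
      unfolding F_def by (simp add: add.commute)
  qed
  also have "\<dots> = (\<Sum>k\<in>P. \<Sum>h\<in>P. al h * ee ((2 * a * h / q) * of_int k))"
    unfolding al_def by (simp add: zz_diff[OF q])
  also have "\<dots> = (\<Sum>h\<in>P. al h * (\<Sum>k\<in>P. ee ((2 * a * h / q) * of_int k)))"
    by (subst sum.swap) (simp add: sum_distrib_left)
  also have "\<dots> = (\<Sum>h\<in>P. if q dvd 2 * h then of_int q * al h else 0)"
  proof (rule sum.cong[OF refl])
    fix h
    have dv: "q dvd 2 * a * h \<longleftrightarrow> q dvd 2 * h"
      using coprime_dvd_mult_right_iff[of q a "2 * h"] cop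
      by (simp add: coprime_commute ac_simps)
    show "al h * (\<Sum>k\<in>P. ee ((2 * a * h / q) * of_int k)) = (if q dvd 2 * h then of_int q * al h else 0)"
      unfolding P_def geom_full[OF q] dv by simp
  qed
  also have "\<dots> = of_int q * (\<Sum>h\<in>{h\<in>P. q dvd 2 * h}. al h)"
    unfolding sum_distrib_left by (rule sum.inter_filter[symmetric]) (simp add: P_def)
  also have "{h\<in>P. q dvd 2 * h} = insert 0 (if even q then {q div 2} else {})"
    unfolding P_def by (rule dvd_set[OF q])
  also have "(\<Sum>h\<in>insert 0 (if even q then {q div 2} else {}). al h) = (if even q then 2 else 1)"
  proof (cases "even q")
    case False
    then show ?thesis by (simp add: al_def)
  next
    case True
    define s where "s = q div 2"
    have qs: "q = 2 * s" using True by (simp add: s_def)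
    have s0: "s \<noteq> 0" using q qs by auto
    have "even (a * s + b)"
    proof (cases "q mod 4 = 0")
      case True
      then have "even s" unfolding s_def by presburger
      then show ?thesis using True b0 by simp
    next
      case False
      then have q2: "q mod 4 = 2" using \<open>even q\<close> by presburger
      then have "odd s" unfolding s_def by presburger
      moreover have "odd a"
      proof
        assume "even a"
        then have "is_unit (2::int)" using coprime_common_divisor[OF cop] \<open>even q\<close> by blast
        then show False by simp
      qed
      ultimately show ?thesis using q2 b2 by simp
    qed
    then obtain t where t: "a * s + b = 2 * t" by blast
    have "a * s^2 + b * s = s * (a * s + b)" by (simp add: power2_eq_square algebra_simps)
    also have "\<dots> = q * t" unfolding t qs by simp
    finally have "a * s^2 + b * s = q * t" .
    then have "real_of_int (a * s^2 + b * s) = real_of_int (q * t)" by (rule arg_cong)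
    then have "(a * s^2 + b * s) / q = real_of_int t" using q by (simp add: field_simps)
    then have "al s = 1" unfolding al_def by (simp add: ee_int)
    then show ?thesis using True s0 by (simp add: al_def s_def)
  qed
  finally have "complex_of_real ((cmod G)^2) = of_int q * (if even q then 2 else 1)" .
  then have "(cmod G)^2 = real_of_int q * (if even q then 2 else 1)"
  proof -
    assume h: "complex_of_real ((cmod G)^2) = of_int q * (if even q then 2 else 1)"
    have "complex_of_real (real_of_int q * (if even q then 2 else 1)) = of_int q * (if even q then 2 else 1)"
      by simp
    then have "complex_of_real ((cmod G)^2) = complex_of_real (real_of_int q * (if even q then 2 else 1))"
      using h by argo
    then show ?thesis by (simp only: of_real_eq_iff)
  qed
  then show ?thesis unfolding G_def P_def by simp
qed



lemma decomp:
  assumes q: "q \<ge> 1" and r: "r \<ge> 0"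
  shows "(\<Sum>k\<in>{m..m + int L * q + r - 1}. zz a b q k) =
    of_nat L * (\<Sum>k\<in>{0..q-1}. zz a b q k) + (\<Sum>k\<in>{m + int L * q..m + int L * q + r - 1}. zz a b q k)"
proof (induction L arbitrary: m)
  case 0
  then show ?case by simp
next
  case (Suc L)
  have per: "zz a b q (x + q) = zz a b q x" for x by (rule zz_per[OF q])
  have split: "{m..m + int (Suc L) * q + r - 1} = {m..m+q-1} \<union> {m+q..(m+q) + int L * q + r - 1}"
  proof -
    define B where "B = int L * q"
    have B0: "0 \<le> B" using q unfolding B_def by simp
    have e: "int (Suc L) * q = q + B" unfolding B_def by (simp add: algebra_simps)
    have "{m..m + (q + B) + r - 1} = {m..m+q-1} \<union> {m+q..(m+q) + B + r - 1}"
      using B0 q r by auto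
    then show ?thesis unfolding e B_def .
  qed
  have "(\<Sum>k\<in>{m..m + int (Suc L) * q + r - 1}. zz a b q k) =
      (\<Sum>k\<in>{m..m+q-1}. zz a b q k) + (\<Sum>k\<in>{m+q..(m+q) + int L * q + r - 1}. zz a b q k)"
    unfolding split by (rule sum.union_disjoint) auto
  also have "(\<Sum>k\<in>{m..m+q-1}. zz a b q k) = (\<Sum>k\<in>{0..q-1}. zz a b q k)"
    by (rule sum_periodic_shift[where F = "zz a b q", OF q per])
  also note Suc.IH[of "m + q"]
  also have "m + q + int L * q = m + int (Suc L) * q" by (simp add: algebra_simps)
  finally show ?case by (simp add: algebra_simps)
qed



theorem lemma2p2:
  shows "\<exists>K::real. \<forall>a b q :: int.
           q \<ge> 1 \<and> coprime a q \<and> (q mod 4 = 0 \<longrightarrow> even b) \<and> (q mod 4 = 2 \<longrightarrow> odd b) \<longrightarrow>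
           (\<exists>C::real. 1/2 \<le> C \<and> C \<le> sqrt 2 \<and>
              (\<forall>m n :: int.
                 \<bar>cmod (quad_exp_sum a b q {m..n}) - C * real (card {m..n}) / sqrt (real_of_int q)\<bar>
                   \<le> K * sqrt (real_of_int q * ln (real_of_int q))))"
proof (rule exI[of _ 10], intro allI impI)
  fix a b q :: int
  assume H: "q \<ge> 1 \<and> coprime a q \<and> (q mod 4 = 0 \<longrightarrow> even b) \<and> (q mod 4 = 2 \<longrightarrow> odd b)"
  then have q: "q \<ge> 1" and cop: "coprime a q" and b0: "q mod 4 = 0 \<longrightarrow> even b"
    and b2: "q mod 4 = 2 \<longrightarrow> odd b" by auto
  have qp: "real_of_int q > 0" using q by simp
  have sq: "sqrt (real_of_int q) > 0" using qp by simp
  define C where "C = (if even q then sqrt 2 else 1)"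
  have s2: "1 \<le> sqrt (2::real)" using real_sqrt_le_mono[of 1 2] by simp
  have C1: "1/2 \<le> C" and C2: "C \<le> sqrt 2"
  proof -
    have d: "C = sqrt 2 \<or> C = 1" unfolding C_def by simp
    show "1/2 \<le> C" using d
    proof
      assume "C = sqrt 2" then show ?thesis using s2 by linarith
    qed simp
    show "C \<le> sqrt 2" using d
    proof
      assume "C = 1" then show ?thesis using s2 by linarith
    qed simp

  qed
  have C0: "C \<ge> 0" using C1 by linarith
  define G where "G = (\<Sum>k\<in>{0..q-1}. zz a b q k)"
  have "(cmod G)^2 = (if even q then 2 * q else q)" unfolding G_def by (rule gauss_full[OF q cop b0 b2])
  also have "\<dots> = (C * sqrt q)^2" using qp unfolding C_def by (simp add: power_mult_distrib)
  finally have cG: "cmod G = C * sqrt q"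
    using C0 sq by (simp add: power2_eq_iff_nonneg)
  define X where "X = sqrt (real_of_int q * ln (real_of_int q))"
  have lnq: "ln (real_of_int q) \<ge> 0" using q by simp
  have X0: "X \<ge> 0" unfolding X_def using qp lnq by simp
  have X2: "X^2 = real_of_int q * ln (real_of_int q)" unfolding X_def using qp lnq by simp
  show "\<exists>C::real. 1/2 \<le> C \<and> C \<le> sqrt 2 \<and>
              (\<forall>m n :: int.
                 \<bar>cmod (quad_exp_sum a b q {m..n}) - C * real (card {m..n}) / sqrt (real_of_int q)\<bar>
                   \<le> 10 * sqrt (real_of_int q * ln (real_of_int q)))"
  proof (rule exI[of _ C], intro conjI allI C1 C2)
    fix m n :: int
    show "\<bar>cmod (quad_exp_sum a b q {m..n}) - C * real (card {m..n}) / sqrt (real_of_int q)\<bar>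
                   \<le> 10 * sqrt (real_of_int q * ln (real_of_int q))"
    proof (cases "n < m")
      case True
      then show ?thesis using X0 unfolding X_def by (simp add: quad_exp_sum_def)
    next
      case False
      define N where "N = n - m + 1"
      have N1: "N \<ge> 1" using False unfolding N_def by simp
      define L where "L = nat (N div q)"
      define r where "r = N mod q"
      have r0: "0 \<le> r" and rq: "r < q" using q unfolding r_def by auto
      have d0: "0 \<le> N div q" using N1 q by (simp add: pos_imp_zdiv_nonneg_iff)
      have NL0: "N = N div q * q + N mod q" by (rule div_mult_mod_eq[symmetric])
      have NL: "N = int L * q + r" unfolding L_def r_def using d0 NL0 by simp
      have n_eq: "n = m + int L * q + r - 1" using NL unfolding N_def by simp
      define S where "S = (\<Sum>k\<in>{m + int L * q..m + int L * q + r - 1}. zz a b q k)"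
      have sum_eq: "quad_exp_sum a b q {m..n} = of_nat L * G + S"
        unfolding quad_exp_sum_zz n_eq S_def G_def by (rule decomp[OF q r0])
      have card_eq: "real (card {m..n}) = real L * q + r"
      proof -
        have "card {m..n} = nat N" unfolding N_def by simp
        then have "real (card {m..n}) = real_of_int N" using N1 by simp
        then show ?thesis using NL by simp
      qed
      have main: "C * real (card {m..n}) / sqrt q = real L * cmod G + C * r / sqrt q"
      proof -
        have qq: "real_of_int q / sqrt q = sqrt q" using qp by (simp add: real_div_sqrt)
        have "C * (real L * real_of_int q + real_of_int r) / sqrt q
            = real L * (C * (real_of_int q / sqrt q)) + C * real_of_int r / sqrt q"
          by (simp add: distrib_left add_divide_distrib mult.assoc mult.left_commute)
        then show ?thesis unfolding card_eq cG qq by (simp add: mult.commute)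
      qed
      have up: "cmod (of_nat L * G + S) \<le> real L * cmod G + cmod S"
        using norm_triangle_ineq[of "of_nat L * G" S] by (simp add: norm_mult)
      have lo: "real L * cmod G - cmod S \<le> cmod (of_nat L * G + S)"
        using norm_diff_ineq[of "of_nat L * G" S] by (simp add: norm_mult)
      have key: "\<bar>cmod (quad_exp_sum a b q {m..n}) - C * real (card {m..n}) / sqrt q\<bar> \<le> cmod S + C * r / sqrt q"
      proof -
        have t: "0 \<le> C * real_of_int r / sqrt q" using C0 r0 sq by simp
        show ?thesis unfolding sum_eq main abs_le_iff using up lo t by linarith
      qed
      show ?thesis
      proof (cases "q = 1")
        case True
        then have "r = 0" using r0 rq by simp
        then have "S = 0" unfolding S_def by simp
        then show ?thesis using key True \<open>r = 0\<close> by simp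
      next
        case False
        then have q2: "real_of_int q \<ge> 2" using q by simp
        have "ln 2 \<le> ln (real_of_int q)" using q2 by simp
        then have ln23: "ln (real_of_int q) \<ge> 2/3" using ln2_ge_two_thirds by linarith
        have "(cmod S)^2 \<le> 4 * (q * (2 + ln q))"
          unfolding S_def using weyl_bound[OF q cop r0 less_imp_le[OF rq], where M = "m + int L * q" and b = b] by simp
        also have "\<dots> \<le> 16 * (q * ln q)"
        proof -
          have "real_of_int q * (2 + ln q) \<le> real_of_int q * (4 * ln q)"
            using ln23 qp by (intro mult_left_mono) auto
          then show ?thesis by simp
        qed
        also have "\<dots> = (4 * X)^2" using X2 by (simp add: power_mult_distrib)
        finally have "(cmod S)^2 \<le> (4 * X)^2" .
        then have Sb: "cmod S \<le> 4 * X" by (rule power2_le_imp_le) (use X0 in simp)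
        have rs: "real_of_int r / sqrt q \<le> sqrt q"
        proof -
          have "real_of_int r \<le> real_of_int q" using rq by simp
          also have "real_of_int q = sqrt q * sqrt q" using qp by simp
          finally show ?thesis using sq by (simp add: pos_divide_le_eq)
        qed
        have rs0: "0 \<le> real_of_int r / sqrt q" using r0 sq by simp
        have "C * r / sqrt q = C * (r / sqrt q)" by simp
        also have "\<dots> \<le> sqrt 2 * sqrt q" by (rule mult_mono[OF C2 rs]) (use rs0 in auto)
        also have "sqrt 2 * sqrt q = sqrt (2 * real_of_int q)" by (simp add: real_sqrt_mult)
        also have "\<dots> \<le> sqrt ((2 * X)^2)"
        proof (rule real_sqrt_le_mono)
          have "real_of_int q * 2 \<le> real_of_int q * (4 * ln q)"
            using ln23 qp by (intro mult_left_mono) auto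
          moreover have "(2 * X)^2 = 4 * X^2" by (simp add: power_mult_distrib)
          moreover have "real_of_int q * (4 * ln q) = 4 * (real_of_int q * ln q)" by simp
          ultimately show "2 * real_of_int q \<le> (2 * X)^2" using X2 by linarith
        qed
        also have "\<dots> = 2 * X" by (subst real_sqrt_abs) (use X0 in simp)
        finally have "C * r / sqrt q \<le> 2 * X" .
        then show ?thesis using key Sb X0 unfolding X_def by linarith
      qed
    qed
  qed
qed

end
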